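(* Let $H$ be the graph consisting of two vertex-disjoint triangles $v_1v_2v_3$ and $w_1w_2w_3$ together with the edge $v_3w_1$. Let $n\ge 7$ and let $G$ be a graph with $n$ vertices obtained from $H$ by attaching $n-6$ pendant edges (new leaves) to vertices of $H$, such that $v_3$ is incident with at least one pendant edge, $w_1$ is incident with no pendant edge, and at least one vertex of $\{v_1,v_2,w_2,w_3\}$ is incident with a pendant edge. Then $\operatorname{avm}(G)>\operatorname{avm}(T_n^1(3,3))$.
   Context: $\operatorname{avm}(G)$ is the average of $|M|$ over all maximal matchings $M$ of $G$ (a matching is maximal if not properly contained in another matching). $T_n^1(3,3)$ is the graph obtained from $H$ by attaching $n-6$ pendant edges (new leaves) to $v_3$. *)

theory Defs
  imports Complex_Main
begin

text \<open>Simple graphs are given by their edge sets: sets of 2-element vertex sets.\<close>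

definition matching :: "'a set set \<Rightarrow> 'a set set \<Rightarrow> bool" where
  "matching E M \<longleftrightarrow> M \<subseteq> E \<and> (\<forall>e\<in>M. \<forall>e'\<in>M. e \<noteq> e' \<longrightarrow> e \<inter> e' = {})"

definition maximal_matching :: "'a set set \<Rightarrow> 'a set set \<Rightarrow> bool" where
  "maximal_matching E M \<longleftrightarrow> matching E M \<and> (\<forall>M'. matching E M' \<and> M \<subseteq> M' \<longrightarrow> M' = M)"

definition avm :: "'a set set \<Rightarrow> real" where
  "avm E = (\<Sum>M\<in>{M. maximal_matching E M}. real (card M))
             / real (card {M. maximal_matching E M})"

text \<open>The graph H on vertices 0..5: v1=0, v2=1, v3=2, w1=3, w2=4, w3=5;
  triangles v1v2v3 and w1w2w3 plus the edge v3w1.\<close>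
definition H_edges :: "nat set set" where
  "H_edges = {{0,1},{1,2},{0,2},{3,4},{4,5},{3,5},{2,3}}"

text \<open>Graph on vertices 0..n-1 obtained from H by attaching, for each
  i with 6 \<le> i < n, the new leaf i to the vertex p i of H.\<close>
definition pendant_graph :: "nat \<Rightarrow> (nat \<Rightarrow> nat) \<Rightarrow> nat set set" where
  "pendant_graph n p = H_edges \<union> {{i, p i} | i. 6 \<le> i \<and> i < n}"

text \<open>T_n^1(3,3): all n-6 pendant edges attached to v3.\<close>
definition T1_33 :: "nat \<Rightarrow> nat set set" where
  "T1_33 n = pendant_graph n (\<lambda>_. 2)"

end

theory Submission imports Defs "HOL-Library.FuncSet" begin

definition HM :: "nat set set list" where
 "HM = [{}, {{0,1}},{{1,2}},{{0,2}},{{3,4}},{{4,5}},{{3,5}},{{2,3}},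
   {{0,1},{3,4}},{{0,1},{4,5}},{{0,1},{3,5}},{{1,2},{3,4}},{{1,2},{4,5}},{{1,2},{3,5}},
   {{0,2},{3,4}},{{0,2},{4,5}},{{0,2},{3,5}},{{0,1},{2,3}},{{4,5},{2,3}},{{0,1},{4,5},{2,3}}]"

lemma HM_ok: "Set.filter (matching H_edges) (Pow H_edges) = set HM"
  by code_simp

lemma HM_dist: "distinct HM"
  by code_simp

lemma HM_iff: "m \<in> set HM \<longleftrightarrow> matching H_edges m"
  using HM_ok[symmetric] unfolding matching_def by auto


lemma maxm_iff:
  "maximal_matching E M \<longleftrightarrow> matching E M \<and> (\<forall>e\<in>E. e \<notin> M \<longrightarrow> (\<exists>f\<in>M. f \<inter> e \<noteq> {}))"
proof
  assume a: "maximal_matching E M"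
  hence m: "matching E M" by (simp add: maximal_matching_def)
  show "matching E M \<and> (\<forall>e\<in>E. e \<notin> M \<longrightarrow> (\<exists>f\<in>M. f \<inter> e \<noteq> {}))"
  proof (intro conjI m ballI impI)
    fix e assume e: "e \<in> E" "e \<notin> M"
    show "\<exists>f\<in>M. f \<inter> e \<noteq> {}"
    proof (rule ccontr)
      assume "\<not> ?thesis"
      hence d: "\<forall>f\<in>M. f \<inter> e = {}" by blast
      have "matching E (insert e M)" using m e d unfolding matching_def by blast
      hence "insert e M = M" using a unfolding maximal_matching_def by blast
      thus False using e by blast
    qed
  qed
next
  assume a: "matching E M \<and> (\<forall>e\<in>E. e \<notin> M \<longrightarrow> (\<exists>f\<in>M. f \<inter> e \<noteq> {}))"
  show "maximal_matching E M" unfolding maximal_matching_def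
  proof (intro conjI allI impI)
    show "matching E M" using a by blast
    fix M' assume b: "matching E M' \<and> M \<subseteq> M'"
    show "M' = M"
    proof (rule ccontr)
      assume "M' \<noteq> M"
      then obtain e where e: "e \<in> M'" "e \<notin> M" using b by blast
      hence "e \<in> E" using b unfolding matching_def by blast
      then obtain f where f: "f \<in> M" "f \<inter> e \<noteq> {}" using a e by blast
      have "f \<in> M'" "f \<noteq> e" using f b e by auto
      thus False using b e f unfolding matching_def by blast
    qed
  qed
qed

definition Lf :: "nat \<Rightarrow> (nat \<Rightarrow> nat) \<Rightarrow> nat \<Rightarrow> nat set" where
  "Lf n p v = {i. 6 \<le> i \<and> i < n \<and> p i = v}"

definition PP :: "nat \<Rightarrow> (nat \<Rightarrow> nat) \<Rightarrow> nat set" where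
  "PP n p = {v. Lf n p v \<noteq> {}}"

definition goodc :: "nat set \<Rightarrow> nat set set \<Rightarrow> bool" where
  "goodc P m \<longleftrightarrow> (\<forall>e\<in>H_edges. e \<inter> (\<Union>m \<union> P) \<noteq> {})"

definition Phi :: "nat \<Rightarrow> (nat \<Rightarrow> nat) \<Rightarrow> nat set set \<times> (nat \<Rightarrow> nat) \<Rightarrow> nat set set" where
  "Phi n p mg = fst mg \<union> (\<lambda>v. {snd mg v, v}) ` (PP n p - \<Union>(fst mg))"

definition Dom :: "nat \<Rightarrow> (nat \<Rightarrow> nat) \<Rightarrow> (nat set set \<times> (nat \<Rightarrow> nat)) set" where
  "Dom n p = (SIGMA m:{m. matching H_edges m \<and> goodc (PP n p) m}. PiE (PP n p - \<Union>m) (Lf n p))"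

lemma H_sub: "e \<in> H_edges \<Longrightarrow> e \<subseteq> {0..5}"
  unfolding H_edges_def by auto

lemma H_fin: "finite H_edges" unfolding H_edges_def by simp

lemma edge_cases:
  assumes "e \<in> pendant_graph n p"
  shows "e \<in> H_edges \<or> (\<exists>i. 6 \<le> i \<and> i < n \<and> e = {i, p i})"
  using assms unfolding pendant_graph_def by blast

context
  fixes n :: nat and p :: "nat \<Rightarrow> nat"
  assumes leaves: "\<forall>i. 6 \<le> i \<and> i < n \<longrightarrow> p i \<le> 5"
begin

lemma pend_notH: "6 \<le> i \<Longrightarrow> {i, x} \<notin> H_edges"
  using H_sub by fastforce

lemma PP_sub: "PP n p \<subseteq> {0..5}"
  using leaves unfolding PP_def Lf_def by auto

lemma Lf_ge: "j \<in> Lf n p v \<Longrightarrow> 6 \<le> j \<and> j < n \<and> p j = v"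
  unfolding Lf_def by auto

lemma edge_with_leaf:
  assumes "e \<in> pendant_graph n p" "j \<in> e" "6 \<le> j"
  shows "e = {j, p j} \<and> j < n"
proof -
  have "e \<notin> H_edges" using assms H_sub by fastforce
  then obtain i where i: "6 \<le> i" "i < n" "e = {i, p i}" using edge_cases[OF assms(1)] by blast
  have "p i \<le> 5" using leaves i by blast
  hence "j = i" using assms i by auto
  thus ?thesis using i by simp
qed

lemma Phi_matching:
  assumes mg: "mg \<in> Dom n p"
  shows "maximal_matching (pendant_graph n p) (Phi n p mg)"
proof -
  obtain m g where mg_eq: "mg = (m, g)" by fastforce
  have mm: "matching H_edges m" and gd: "goodc (PP n p) m"
    and g: "g \<in> PiE (PP n p - \<Union>m) (Lf n p)"
    using mg unfolding mg_eq Dom_def by auto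
  let ?Q = "PP n p - \<Union>m"
  have gv: "\<And>v. v \<in> ?Q \<Longrightarrow> 6 \<le> g v \<and> g v < n \<and> p (g v) = v"
    using g Lf_ge by (meson PiE_mem)
  have Qle: "\<And>v. v \<in> ?Q \<Longrightarrow> v \<le> 5" using PP_sub by auto
  define M where "M = Phi n p mg"
  have M_eq: "M = m \<union> (\<lambda>v. {g v, v}) ` ?Q" unfolding M_def Phi_def mg_eq by simp
  have msub: "m \<subseteq> H_edges" using mm unfolding matching_def by blast
  have sub: "M \<subseteq> pendant_graph n p"
  proof
    fix e assume "e \<in> M"
    then consider "e \<in> m" | v where "v \<in> ?Q" "e = {g v, v}" unfolding M_eq by blast
    thus "e \<in> pendant_graph n p"
    proof cases
      case 1 thus ?thesis using msub unfolding pendant_graph_def by blast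
    next
      case 2
      have "e = {g v, p (g v)}" "6 \<le> g v" "g v < n" using gv[OF 2(1)] 2 by auto
      thus ?thesis unfolding pendant_graph_def by blast
    qed
  qed
  have disj: "\<forall>e\<in>M. \<forall>e'\<in>M. e \<noteq> e' \<longrightarrow> e \<inter> e' = {}"
  proof (intro ballI impI)
    fix e e' assume e: "e \<in> M" and e': "e' \<in> M" and ne: "e \<noteq> e'"
    show "e \<inter> e' = {}"
    proof (cases "e \<in> m")
      case True
      show ?thesis
      proof (cases "e' \<in> m")
        case True thus ?thesis using \<open>e \<in> m\<close> mm ne unfolding matching_def by blast
      next
        case False
        then obtain v where v: "v \<in> ?Q" "e' = {g v, v}" using e' unfolding M_eq by blast
        have "g v \<notin> e" using gv[OF v(1)] H_sub msub True by fastforce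
        moreover have "v \<notin> e" using v True by blast
        ultimately show ?thesis using v by blast
      qed
    next
      case False
      then obtain v where v: "v \<in> ?Q" "e = {g v, v}" using e unfolding M_eq by blast
      show ?thesis
      proof (cases "e' \<in> m")
        case True
        have "g v \<notin> e'" using gv[OF v(1)] H_sub msub True by fastforce
        moreover have "v \<notin> e'" using v True by blast
        ultimately show ?thesis using v by blast
      next
        case False
        then obtain u where u: "u \<in> ?Q" "e' = {g u, u}" using e' unfolding M_eq by blast
        have "u \<noteq> v" using ne u v by blast
        moreover have "g u \<noteq> g v" using gv[OF u(1)] gv[OF v(1)] \<open>u \<noteq> v\<close> by metis
        moreover have "g u \<noteq> v" "g v \<noteq> u" using gv[OF u(1)] gv[OF v(1)] Qle[OF u(1)] Qle[OF v(1)] by auto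
        ultimately show ?thesis using u v by auto
      qed
    qed
  qed
  have mat: "matching (pendant_graph n p) M" unfolding matching_def using sub disj by blast
  have "\<forall>e\<in>pendant_graph n p. e \<notin> M \<longrightarrow> (\<exists>f\<in>M. f \<inter> e \<noteq> {})"
  proof (intro ballI impI)
    fix e assume eE: "e \<in> pendant_graph n p" and eM: "e \<notin> M"
    have cover: "\<exists>f\<in>M. f \<inter> e \<noteq> {}" if x: "x \<in> e" "x \<in> \<Union>m \<union> PP n p" for x
    proof (cases "x \<in> \<Union>m")
      case True
      then obtain f where "f \<in> m" "x \<in> f" by blast
      have "f \<in> M" using \<open>f \<in> m\<close> M_eq by blast
      moreover have "f \<inter> e \<noteq> {}" using x \<open>x \<in> f\<close> by blast
      ultimately show ?thesis by (rule bexI[rotated])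
    next
      case False
      hence "x \<in> ?Q" using x by blast
      hence "{g x, x} \<in> M" unfolding M_eq by blast
      moreover have "{g x, x} \<inter> e \<noteq> {}" using x by blast
      ultimately show ?thesis by (rule bexI[rotated])
    qed
    from edge_cases[OF eE] show "\<exists>f\<in>M. f \<inter> e \<noteq> {}"
    proof
      assume "e \<in> H_edges"
      then obtain x where "x \<in> e" "x \<in> \<Union>m \<union> PP n p" using gd unfolding goodc_def by blast
      thus ?thesis using cover by blast
    next
      assume "\<exists>i. 6 \<le> i \<and> i < n \<and> e = {i, p i}"
      then obtain i where i: "6 \<le> i" "i < n" "e = {i, p i}" by blast
      have "i \<in> Lf n p (p i)" unfolding Lf_def using i by simp
      hence "p i \<in> PP n p" unfolding PP_def by blast
      thus ?thesis using cover[of "p i"] i by blast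
    qed
  qed
  thus ?thesis using mat maxm_iff M_def by blast
qed


lemma Phi_H: "mg \<in> Dom n p \<Longrightarrow> Phi n p mg \<inter> H_edges = fst mg"
proof -
  assume mg: "mg \<in> Dom n p"
  obtain m g where mg_eq: "mg = (m, g)" by fastforce
  have mm: "matching H_edges m" and g: "g \<in> PiE (PP n p - \<Union>m) (Lf n p)"
    using mg unfolding mg_eq Dom_def by auto
  have "\<And>v. v \<in> PP n p - \<Union>m \<Longrightarrow> {g v, v} \<notin> H_edges"
    using g Lf_ge pend_notH by (meson PiE_mem)
  moreover have "m \<subseteq> H_edges" using mm unfolding matching_def by blast
  ultimately show ?thesis unfolding Phi_def mg_eq by auto
qed

lemma Phi_inj: "inj_on (Phi n p) (Dom n p)"
proof (rule inj_onI)
  fix x y assume x: "x \<in> Dom n p" and y: "y \<in> Dom n p" and eq: "Phi n p x = Phi n p y"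
  obtain m g where xe: "x = (m, g)" by fastforce
  obtain m' g' where ye: "y = (m', g')" by fastforce
  have "m = m'" using Phi_H[OF x] Phi_H[OF y] eq xe ye by simp
  have g: "g \<in> PiE (PP n p - \<Union>m) (Lf n p)" using x xe unfolding Dom_def by auto
  have g': "g' \<in> PiE (PP n p - \<Union>m) (Lf n p)" using y ye \<open>m = m'\<close> unfolding Dom_def by auto
  let ?Q = "PP n p - \<Union>m"
  have "g = g'"
  proof (rule PiE_ext[OF g g'])
    fix v assume v: "v \<in> ?Q"
    have "{g v, v} \<in> Phi n p x" unfolding Phi_def xe using v by auto
    hence "{g v, v} \<in> Phi n p y" using eq by simp
    moreover have "{g v, v} \<notin> m'"
    proof -
      have "6 \<le> g v" using Lf_ge[OF PiE_mem[OF g v]] by simp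
      hence "{g v, v} \<notin> H_edges" by (rule pend_notH)
      moreover have "m' \<subseteq> H_edges" using y ye unfolding Dom_def matching_def by auto
      ultimately show ?thesis by blast
    qed
    ultimately obtain u where u: "u \<in> ?Q" "{g v, v} = {g' u, u}"
      unfolding Phi_def ye \<open>m = m'\<close>[symmetric] by auto
    have "6 \<le> g v" "6 \<le> g' u" using PiE_mem[OF g v] PiE_mem[OF g' u(1)] Lf_ge by auto
    moreover have "v \<le> 5" "u \<le> 5" using v u(1) PP_sub by auto
    ultimately show "g v = g' v" using u(2) by (auto simp: doubleton_eq_iff)
  qed
  thus "x = y" using xe ye \<open>m = m'\<close> by simp
qed

lemma Phi_surj:
  assumes M: "maximal_matching (pendant_graph n p) M"
  shows "M \<in> Phi n p ` Dom n p"
proof -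
  define E where "E = pendant_graph n p"
  have mat: "matching E M" and mx: "\<forall>e\<in>E. e \<notin> M \<longrightarrow> (\<exists>f\<in>M. f \<inter> e \<noteq> {})"
    using M maxm_iff unfolding E_def by blast+
  have ME: "M \<subseteq> E" and dj: "\<And>e f. e \<in> M \<Longrightarrow> f \<in> M \<Longrightarrow> e \<noteq> f \<Longrightarrow> e \<inter> f = {}"
    using mat unfolding matching_def by blast+
  define m where "m = M \<inter> H_edges"
  let ?Q = "PP n p - \<Union>m"
  have mm: "matching H_edges m" using mat unfolding matching_def m_def by blast
  have pend: "\<exists>j. 6 \<le> j \<and> j < n \<and> f = {j, p j} \<and> p j \<notin> \<Union>m" if f: "f \<in> M" "f \<notin> H_edges" for f
  proof -
    obtain j where j: "6 \<le> j" "j < n" "f = {j, p j}" using edge_cases[of f n p] f ME E_def by blast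
    have "p j \<notin> \<Union>m"
    proof
      assume "p j \<in> \<Union>m"
      then obtain h where h: "h \<in> m" "p j \<in> h" by blast
      have "h \<in> M" "h \<noteq> f" using h f m_def by auto
      hence "h \<inter> f = {}" using dj f by blast
      thus False using h j by blast
    qed
    thus ?thesis using j by blast
  qed
  have ex: "\<exists>j. j \<in> Lf n p v \<and> {j, v} \<in> M" if v: "v \<in> ?Q" for v
  proof -
    obtain i where i: "i \<in> Lf n p v" using v unfolding PP_def by blast
    have i': "6 \<le> i" "i < n" "p i = v" using Lf_ge[OF i] by auto
    have eE: "{i, v} \<in> E" unfolding E_def pendant_graph_def using i' by blast
    show ?thesis
    proof (cases "{i, v} \<in> M")
      case True thus ?thesis using i by blast
    next
      case False
      then obtain f where f: "f \<in> M" "f \<inter> {i, v} \<noteq> {}" using mx eE by blast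
      then obtain x where x: "x \<in> f" "x = i \<or> x = v" by blast
      show ?thesis
      proof (cases "x = i")
        case True
        have "f = {i, p i}" using edge_with_leaf[of f i] f x ME E_def True i' by blast
        thus ?thesis using f i i' by auto
      next
        case False
        hence xv: "x = v" using x by blast
        have "f \<notin> H_edges" using f x xv v m_def by blast
        then obtain j where j: "6 \<le> j" "j < n" "f = {j, p j}" using pend f by blast
        have "v \<le> 5" using v PP_sub by auto
        hence "v = p j" using x xv j by auto
        hence "j \<in> Lf n p v" unfolding Lf_def using j by simp
        thus ?thesis using j \<open>v = p j\<close> f by auto
      qed
    qed
  qed
  define g where "g = restrict (\<lambda>v. SOME j. j \<in> Lf n p v \<and> {j, v} \<in> M) ?Q"
  have gv: "g v \<in> Lf n p v \<and> {g v, v} \<in> M" if "v \<in> ?Q" for v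
    unfolding g_def using someI_ex[OF ex[OF that]] that by simp
  have gP: "g \<in> PiE ?Q (Lf n p)" unfolding g_def restrict_PiE_iff
    using gv unfolding g_def by auto
  have gd: "goodc (PP n p) m" unfolding goodc_def
  proof
    fix e assume e: "e \<in> H_edges"
    have ne: "e \<noteq> {}" using e unfolding H_edges_def by auto
    show "e \<inter> (\<Union>m \<union> PP n p) \<noteq> {}"
    proof (cases "e \<in> M")
      case True
      hence "e \<in> m" using e m_def by blast
      thus ?thesis using ne by blast
    next
      case False
      have "e \<in> E" using e unfolding E_def pendant_graph_def by blast
      then obtain f where f: "f \<in> M" "f \<inter> e \<noteq> {}" using mx False by blast
      then obtain x where x: "x \<in> f" "x \<in> e" by blast
      show ?thesis
      proof (cases "f \<in> H_edges")
        case True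
        hence "x \<in> \<Union>m" using f x m_def by blast
        thus ?thesis using x by blast
      next
        case False
        then obtain j where j: "6 \<le> j" "j < n" "f = {j, p j}" using pend f by blast
        have "x \<le> 5" using x e H_sub by fastforce
        hence "x = p j" using x j by auto
        hence "j \<in> Lf n p x" unfolding Lf_def using j by simp
        hence "x \<in> PP n p" unfolding PP_def by blast
        thus ?thesis using x by blast
      qed
    qed
  qed
  have dom: "(m, g) \<in> Dom n p" unfolding Dom_def using mm gd gP by simp
  have "Phi n p (m, g) = M"
  proof
    show "Phi n p (m, g) \<subseteq> M" unfolding Phi_def using gv m_def by auto
  next
    show "M \<subseteq> Phi n p (m, g)"
    proof
      fix f assume f: "f \<in> M"
      show "f \<in> Phi n p (m, g)"
      proof (cases "f \<in> H_edges")
        case True thus ?thesis using f m_def unfolding Phi_def by auto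
      next
        case False
        then obtain j where j: "6 \<le> j" "j < n" "f = {j, p j}" "p j \<notin> \<Union>m" using pend f by blast
        have "j \<in> Lf n p (p j)" unfolding Lf_def using j by simp
        hence v: "p j \<in> ?Q" using j unfolding PP_def by blast
        have "{g (p j), p j} \<in> M" using gv[OF v] by blast
        hence "f = {g (p j), p j}" using dj[OF f] j by blast
        thus ?thesis unfolding Phi_def using v by auto
      qed
    qed
  qed
  hence "M = Phi n p (m, g)" by simp
  thus ?thesis using dom by (rule image_eqI)
qed

lemma Phi_bij: "bij_betw (Phi n p) (Dom n p) {M. maximal_matching (pendant_graph n p) M}"
  unfolding bij_betw_def
proof (intro conjI Phi_inj)
  show "Phi n p ` Dom n p = {M. maximal_matching (pendant_graph n p) M}"
  proof
    show "Phi n p ` Dom n p \<subseteq> {M. maximal_matching (pendant_graph n p) M}"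
      using Phi_matching by (simp add: image_subset_iff)
    show "{M. maximal_matching (pendant_graph n p) M} \<subseteq> Phi n p ` Dom n p"
      using Phi_surj by (simp add: subset_iff)
  qed
qed

end

definition Gd :: "nat set \<Rightarrow> nat set set set" where
  "Gd P = {m. matching H_edges m \<and> goodc P m}"

lemma Gd_list: "Gd P = set (filter (goodc P) HM)"
  unfolding Gd_def using HM_iff by auto

lemma Gd_fin: "finite (Gd P)" unfolding Gd_list by simp

lemma sum_Gd: "(\<Sum>m\<in>Gd P. f m) = sum_list (map f (filter (goodc P) HM))"
  unfolding Gd_list by (simp add: sum_list_distinct_conv_sum_set HM_dist)

definition LL :: "nat set \<Rightarrow> (nat set \<times> nat) list" where
  "LL P = map (\<lambda>m. (P - \<Union>m, card m)) (filter (goodc P) HM)"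

definition NL :: "(nat \<Rightarrow> nat) \<Rightarrow> (nat set \<times> nat) list \<Rightarrow> nat" where
  "NL a L = sum_list (map (\<lambda>(U,c). \<Prod>v\<in>U. a v) L)"

definition SL :: "(nat \<Rightarrow> nat) \<Rightarrow> (nat set \<times> nat) list \<Rightarrow> nat" where
  "SL a L = sum_list (map (\<lambda>(U,c). (c + card U) * (\<Prod>v\<in>U. a v)) L)"

context
  fixes n :: nat and p :: "nat \<Rightarrow> nat"
  assumes leaves: "\<forall>i. 6 \<le> i \<and> i < n \<longrightarrow> p i \<le> 5"
begin

lemma Lf_fin: "finite (Lf n p v)" unfolding Lf_def by (rule finite_subset[of _ "{..<n}"]) auto

lemma PP_fin: "finite (PP n p)" using PP_sub[OF leaves] by (rule finite_subset) simp

lemma Dom_Sigma: "Dom n p = (SIGMA m:Gd (PP n p). PiE (PP n p - \<Union>m) (Lf n p))"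
  unfolding Dom_def Gd_def by simp

lemma card_max:
  "card {M. maximal_matching (pendant_graph n p) M} = NL (\<lambda>v. card (Lf n p v)) (LL (PP n p))"
proof -
  have "card {M. maximal_matching (pendant_graph n p) M} = card (Dom n p)"
    using bij_betw_same_card[OF Phi_bij[OF leaves]] by simp
  also have "\<dots> = (\<Sum>m\<in>Gd (PP n p). \<Prod>v\<in>PP n p - \<Union>m. card (Lf n p v))"
    unfolding Dom_Sigma using Gd_fin PP_fin Lf_fin
    by (simp add: card_PiE finite_PiE)
  also have "\<dots> = NL (\<lambda>v. card (Lf n p v)) (LL (PP n p))"
    unfolding sum_Gd NL_def LL_def by (simp add: comp_def)
  finally show ?thesis .
qed

lemma card_Phi:
  assumes "(m, g) \<in> Dom n p"
  shows "card (Phi n p (m, g)) = card m + card (PP n p - \<Union>m)"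
proof -
  let ?Q = "PP n p - \<Union>m"
  have mm: "matching H_edges m" and g: "g \<in> PiE ?Q (Lf n p)"
    using assms unfolding Dom_def by auto
  have msub: "m \<subseteq> H_edges" using mm unfolding matching_def by blast
  have g6: "6 \<le> g v" if "v \<in> ?Q" for v using Lf_ge[OF leaves PiE_mem[OF g that]] by simp
  have Q5: "\<And>v. v \<in> ?Q \<Longrightarrow> v \<le> 5" using PP_sub[OF leaves] by auto
  have fm: "finite m" using msub H_fin finite_subset by blast
  have fQ: "finite ?Q" using PP_fin by simp
  have dis: "m \<inter> (\<lambda>v. {g v, v}) ` ?Q = {}"
  proof -
    have "{g v, v} \<notin> m" if "v \<in> ?Q" for v using msub pend_notH[OF leaves g6[OF that]] by blast
    thus ?thesis by blast
  qed
  have inj: "inj_on (\<lambda>v. {g v, v}) ?Q"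
  proof (rule inj_onI)
    fix u v assume u: "u \<in> ?Q" and v: "v \<in> ?Q" and eq: "{g u, u} = {g v, v}"
    show "u = v" using g6[OF u] g6[OF v] Q5[OF u] Q5[OF v] eq by (auto simp: doubleton_eq_iff)
  qed
  show ?thesis unfolding Phi_def fst_conv snd_conv
    using card_Un_disjoint[OF fm finite_imageI[OF fQ] dis] card_image[OF inj] by simp
qed

lemma sum_max:
  "(\<Sum>M\<in>{M. maximal_matching (pendant_graph n p) M}. card M) = SL (\<lambda>v. card (Lf n p v)) (LL (PP n p))"
proof -
  have "(\<Sum>M\<in>{M. maximal_matching (pendant_graph n p) M}. card M) = (\<Sum>x\<in>Dom n p. card (Phi n p x))"
    using sum.reindex_bij_betw[OF Phi_bij[OF leaves], of card] by simp
  also have "\<dots> = (\<Sum>m\<in>Gd (PP n p). \<Sum>g\<in>PiE (PP n p - \<Union>m) (Lf n p). card (Phi n p (m, g)))"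
    unfolding Dom_Sigma using Gd_fin PP_fin Lf_fin
    by (subst sum.Sigma) (auto simp: finite_PiE)
  also have "\<dots> = (\<Sum>m\<in>Gd (PP n p). (card m + card (PP n p - \<Union>m)) * (\<Prod>v\<in>PP n p - \<Union>m. card (Lf n p v)))"
  proof (rule sum.cong[OF refl])
    fix m assume m: "m \<in> Gd (PP n p)"
    have "(\<Sum>g\<in>PiE (PP n p - \<Union>m) (Lf n p). card (Phi n p (m, g)))
        = (\<Sum>g\<in>PiE (PP n p - \<Union>m) (Lf n p). card m + card (PP n p - \<Union>m))"
      by (rule sum.cong[OF refl], rule card_Phi) (use m in \<open>auto simp: Dom_Sigma\<close>)
    also have "\<dots> = (card m + card (PP n p - \<Union>m)) * (\<Prod>v\<in>PP n p - \<Union>m. card (Lf n p v))"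
      using PP_fin by (simp add: card_PiE mult.commute)
    finally show "(\<Sum>g\<in>PiE (PP n p - \<Union>m) (Lf n p). card (Phi n p (m, g))) = \<dots>" .
  qed
  also have "\<dots> = SL (\<lambda>v. card (Lf n p v)) (LL (PP n p))"
    unfolding sum_Gd SL_def LL_def by (simp add: comp_def)
  finally show ?thesis .
qed

lemma sum_Lf: "(\<Sum>v\<in>PP n p. card (Lf n p v)) = n - 6"
proof -
  have "{6..<n} = (\<Union>v\<in>PP n p. Lf n p v)"
    unfolding PP_def Lf_def by auto
  moreover have "card (\<Union>v\<in>PP n p. Lf n p v) = (\<Sum>v\<in>PP n p. card (Lf n p v))"
    by (rule card_UN_disjoint[OF PP_fin]) (auto simp: Lf_fin Lf_def)
  ultimately show ?thesis by (metis card_atLeastLessThan)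
qed

lemma avm_eq:
  "avm (pendant_graph n p) = real (SL (\<lambda>v. card (Lf n p v)) (LL (PP n p))) / real (NL (\<lambda>v. card (Lf n p v)) (LL (PP n p)))"
  unfolding avm_def using sum_max card_max by (metis of_nat_sum)

end
lemma ineq_02: fixes a0v x0v a2v x2v :: nat
  assumes "a0v = x0v+1" "a2v = x2v+1"
  shows "(9*(a0v+a2v)+15)*(a0v*a2v + a0v*a2v + a0v*a2v + a2v + a2v + a2v + a0v + a0v + a0v + 1 + 1 + 1 + a0v + 1) < (3*a0v*a2v + 3*a0v*a2v + 3*a0v*a2v + 3*a2v + 3*a2v + 3*a2v + 3*a0v + 3*a0v + 3*a0v + 2*1 + 2*1 + 2*1 + 3*a0v + 3*1)*(3*(a0v+a2v)+7)"
  unfolding assms by (simp add: algebra_simps)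

lemma LL_02: "LL {0,2} = [({0,2},1), ({0,2},1), ({0,2},1), ({2},2), ({2},2), ({2},2), ({0},2), ({0},2), ({0},2), ({},2), ({},2), ({},2), ({0},2), ({},3)]"
  by code_simp

lemma case_02: fixes a :: "nat \<Rightarrow> nat"
  assumes "\<forall>v\<in>{0,2}. 1 \<le> a v"
  shows "0 < NL a (LL {0,2}) \<and> (9*(\<Sum>v\<in>{0,2}. a v)+15) * NL a (LL {0,2}) < SL a (LL {0,2}) * (3*(\<Sum>v\<in>{0,2}. a v)+7)"
proof -
  have N: "NL a (LL {0,2}) = a 0*a 2 + a 0*a 2 + a 0*a 2 + a 2 + a 2 + a 2 + a 0 + a 0 + a 0 + 1 + 1 + 1 + a 0 + 1" unfolding LL_02 NL_def by (simp add: algebra_simps)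
  have S: "SL a (LL {0,2}) = 3*a 0*a 2 + 3*a 0*a 2 + 3*a 0*a 2 + 3*a 2 + 3*a 2 + 3*a 2 + 3*a 0 + 3*a 0 + 3*a 0 + 2*1 + 2*1 + 2*1 + 3*a 0 + 3*1" unfolding LL_02 SL_def by (simp add: algebra_simps)
  have k: "(\<Sum>v\<in>{0,2}. a v) = a 0+a 2" by simp
  have i: "(9*(a 0+a 2)+15)*(a 0*a 2 + a 0*a 2 + a 0*a 2 + a 2 + a 2 + a 2 + a 0 + a 0 + a 0 + 1 + 1 + 1 + a 0 + 1) < (3*a 0*a 2 + 3*a 0*a 2 + 3*a 0*a 2 + 3*a 2 + 3*a 2 + 3*a 2 + 3*a 0 + 3*a 0 + 3*a 0 + 2*1 + 2*1 + 2*1 + 3*a 0 + 3*1)*(3*(a 0+a 2)+7)"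
    by (rule ineq_02[where x0v="a 0 - 1" and x2v="a 2 - 1"]) (use assms in auto)
  show ?thesis unfolding N S k by (intro conjI[OF _ i]) simp
qed

lemma ineq_12: fixes a1v x1v a2v x2v :: nat
  assumes "a1v = x1v+1" "a2v = x2v+1"
  shows "(9*(a1v+a2v)+15)*(a1v*a2v + a1v*a2v + a1v*a2v + a2v + a2v + a2v + 1 + 1 + 1 + a1v + a1v + a1v + a1v + 1) < (3*a1v*a2v + 3*a1v*a2v + 3*a1v*a2v + 3*a2v + 3*a2v + 3*a2v + 2*1 + 2*1 + 2*1 + 3*a1v + 3*a1v + 3*a1v + 3*a1v + 3*1)*(3*(a1v+a2v)+7)"
  unfolding assms by (simp add: algebra_simps)

lemma LL_12: "LL {1,2} = [({1,2},1), ({1,2},1), ({1,2},1), ({2},2), ({2},2), ({2},2), ({},2), ({},2), ({},2), ({1},2), ({1},2), ({1},2), ({1},2), ({},3)]"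
  by code_simp

lemma case_12: fixes a :: "nat \<Rightarrow> nat"
  assumes "\<forall>v\<in>{1,2}. 1 \<le> a v"
  shows "0 < NL a (LL {1,2}) \<and> (9*(\<Sum>v\<in>{1,2}. a v)+15) * NL a (LL {1,2}) < SL a (LL {1,2}) * (3*(\<Sum>v\<in>{1,2}. a v)+7)"
proof -
  have N: "NL a (LL {1,2}) = a 1*a 2 + a 1*a 2 + a 1*a 2 + a 2 + a 2 + a 2 + 1 + 1 + 1 + a 1 + a 1 + a 1 + a 1 + 1" unfolding LL_12 NL_def by (simp add: algebra_simps)
  have S: "SL a (LL {1,2}) = 3*a 1*a 2 + 3*a 1*a 2 + 3*a 1*a 2 + 3*a 2 + 3*a 2 + 3*a 2 + 2*1 + 2*1 + 2*1 + 3*a 1 + 3*a 1 + 3*a 1 + 3*a 1 + 3*1" unfolding LL_12 SL_def by (simp add: algebra_simps)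
  have k: "(\<Sum>v\<in>{1,2}. a v) = a 1+a 2" by simp
  have i: "(9*(a 1+a 2)+15)*(a 1*a 2 + a 1*a 2 + a 1*a 2 + a 2 + a 2 + a 2 + 1 + 1 + 1 + a 1 + a 1 + a 1 + a 1 + 1) < (3*a 1*a 2 + 3*a 1*a 2 + 3*a 1*a 2 + 3*a 2 + 3*a 2 + 3*a 2 + 2*1 + 2*1 + 2*1 + 3*a 1 + 3*a 1 + 3*a 1 + 3*a 1 + 3*1)*(3*(a 1+a 2)+7)"
    by (rule ineq_12[where x1v="a 1 - 1" and x2v="a 2 - 1"]) (use assms in auto)
  show ?thesis unfolding N S k by (intro conjI[OF _ i]) simp
qed

lemma ineq_24: fixes a2v x2v a4v x4v :: nat
  assumes "a2v = x2v+1" "a4v = x4v+1"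
  shows "(9*(a2v+a4v)+15)*(a2v + a2v + a2v*a4v + 1 + 1 + a4v + 1 + 1 + a4v + a4v + 1) < (3*a2v + 3*a2v + 4*a2v*a4v + 2*1 + 2*1 + 3*a4v + 2*1 + 2*1 + 3*a4v + 3*a4v + 3*1)*(3*(a2v+a4v)+7)"
  unfolding assms by (simp add: algebra_simps)

lemma LL_24: "LL {2,4} = [({2},2), ({2},2), ({2,4},2), ({},2), ({},2), ({4},2), ({},2), ({},2), ({4},2), ({4},2), ({},3)]"
  by code_simp

lemma case_24: fixes a :: "nat \<Rightarrow> nat"
  assumes "\<forall>v\<in>{2,4}. 1 \<le> a v"
  shows "0 < NL a (LL {2,4}) \<and> (9*(\<Sum>v\<in>{2,4}. a v)+15) * NL a (LL {2,4}) < SL a (LL {2,4}) * (3*(\<Sum>v\<in>{2,4}. a v)+7)"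
proof -
  have N: "NL a (LL {2,4}) = a 2 + a 2 + a 2*a 4 + 1 + 1 + a 4 + 1 + 1 + a 4 + a 4 + 1" unfolding LL_24 NL_def by (simp add: algebra_simps)
  have S: "SL a (LL {2,4}) = 3*a 2 + 3*a 2 + 4*a 2*a 4 + 2*1 + 2*1 + 3*a 4 + 2*1 + 2*1 + 3*a 4 + 3*a 4 + 3*1" unfolding LL_24 SL_def by (simp add: algebra_simps)
  have k: "(\<Sum>v\<in>{2,4}. a v) = a 2+a 4" by simp
  have i: "(9*(a 2+a 4)+15)*(a 2 + a 2 + a 2*a 4 + 1 + 1 + a 4 + 1 + 1 + a 4 + a 4 + 1) < (3*a 2 + 3*a 2 + 4*a 2*a 4 + 2*1 + 2*1 + 3*a 4 + 2*1 + 2*1 + 3*a 4 + 3*a 4 + 3*1)*(3*(a 2+a 4)+7)"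
    by (rule ineq_24[where x2v="a 2 - 1" and x4v="a 4 - 1"]) (use assms in auto)
  show ?thesis unfolding N S k by (intro conjI[OF _ i]) simp
qed

lemma ineq_25: fixes a2v x2v a5v x5v :: nat
  assumes "a2v = x2v+1" "a5v = x5v+1"
  shows "(9*(a2v+a5v)+15)*(a2v*a5v + a2v + a2v + a5v + 1 + 1 + a5v + 1 + 1 + a5v + 1) < (4*a2v*a5v + 3*a2v + 3*a2v + 3*a5v + 2*1 + 2*1 + 3*a5v + 2*1 + 2*1 + 3*a5v + 3*1)*(3*(a2v+a5v)+7)"
  unfolding assms by (simp add: algebra_simps)

lemma LL_25: "LL {2,5} = [({2,5},2), ({2},2), ({2},2), ({5},2), ({},2), ({},2), ({5},2), ({},2), ({},2), ({5},2), ({},3)]"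
  by code_simp

lemma case_25: fixes a :: "nat \<Rightarrow> nat"
  assumes "\<forall>v\<in>{2,5}. 1 \<le> a v"
  shows "0 < NL a (LL {2,5}) \<and> (9*(\<Sum>v\<in>{2,5}. a v)+15) * NL a (LL {2,5}) < SL a (LL {2,5}) * (3*(\<Sum>v\<in>{2,5}. a v)+7)"
proof -
  have N: "NL a (LL {2,5}) = a 2*a 5 + a 2 + a 2 + a 5 + 1 + 1 + a 5 + 1 + 1 + a 5 + 1" unfolding LL_25 NL_def by (simp add: algebra_simps)
  have S: "SL a (LL {2,5}) = 4*a 2*a 5 + 3*a 2 + 3*a 2 + 3*a 5 + 2*1 + 2*1 + 3*a 5 + 2*1 + 2*1 + 3*a 5 + 3*1" unfolding LL_25 SL_def by (simp add: algebra_simps)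
  have k: "(\<Sum>v\<in>{2,5}. a v) = a 2+a 5" by simp
  have i: "(9*(a 2+a 5)+15)*(a 2*a 5 + a 2 + a 2 + a 5 + 1 + 1 + a 5 + 1 + 1 + a 5 + 1) < (4*a 2*a 5 + 3*a 2 + 3*a 2 + 3*a 5 + 2*1 + 2*1 + 3*a 5 + 2*1 + 2*1 + 3*a 5 + 3*1)*(3*(a 2+a 5)+7)"
    by (rule ineq_25[where x2v="a 2 - 1" and x5v="a 5 - 1"]) (use assms in auto)
  show ?thesis unfolding N S k by (intro conjI[OF _ i]) simp
qed

lemma ineq_012: fixes a0v x0v a1v x1v a2v x2v :: nat
  assumes "a0v = x0v+1" "a1v = x1v+1" "a2v = x2v+1"
  shows "(9*(a0v+a1v+a2v)+15)*(a0v*a1v*a2v + a0v*a1v*a2v + a0v*a1v*a2v + a2v + a2v + a2v + a0v + a0v + a0v + a1v + a1v + a1v + a0v*a1v + 1) < (4*a0v*a1v*a2v + 4*a0v*a1v*a2v + 4*a0v*a1v*a2v + 3*a2v + 3*a2v + 3*a2v + 3*a0v + 3*a0v + 3*a0v + 3*a1v + 3*a1v + 3*a1v + 4*a0v*a1v + 3*1)*(3*(a0v+a1v+a2v)+7)"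
  unfolding assms by (simp add: algebra_simps)

lemma LL_012: "LL {0,1,2} = [({0,1,2},1), ({0,1,2},1), ({0,1,2},1), ({2},2), ({2},2), ({2},2), ({0},2), ({0},2), ({0},2), ({1},2), ({1},2), ({1},2), ({0,1},2), ({},3)]"
  by code_simp

lemma case_012: fixes a :: "nat \<Rightarrow> nat"
  assumes "\<forall>v\<in>{0,1,2}. 1 \<le> a v"
  shows "0 < NL a (LL {0,1,2}) \<and> (9*(\<Sum>v\<in>{0,1,2}. a v)+15) * NL a (LL {0,1,2}) < SL a (LL {0,1,2}) * (3*(\<Sum>v\<in>{0,1,2}. a v)+7)"
proof -
  have N: "NL a (LL {0,1,2}) = a 0*a 1*a 2 + a 0*a 1*a 2 + a 0*a 1*a 2 + a 2 + a 2 + a 2 + a 0 + a 0 + a 0 + a 1 + a 1 + a 1 + a 0*a 1 + 1" unfolding LL_012 NL_def by (simp add: algebra_simps)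
  have S: "SL a (LL {0,1,2}) = 4*a 0*a 1*a 2 + 4*a 0*a 1*a 2 + 4*a 0*a 1*a 2 + 3*a 2 + 3*a 2 + 3*a 2 + 3*a 0 + 3*a 0 + 3*a 0 + 3*a 1 + 3*a 1 + 3*a 1 + 4*a 0*a 1 + 3*1" unfolding LL_012 SL_def by (simp add: algebra_simps)
  have k: "(\<Sum>v\<in>{0,1,2}. a v) = a 0+a 1+a 2" by simp
  have i: "(9*(a 0+a 1+a 2)+15)*(a 0*a 1*a 2 + a 0*a 1*a 2 + a 0*a 1*a 2 + a 2 + a 2 + a 2 + a 0 + a 0 + a 0 + a 1 + a 1 + a 1 + a 0*a 1 + 1) < (4*a 0*a 1*a 2 + 4*a 0*a 1*a 2 + 4*a 0*a 1*a 2 + 3*a 2 + 3*a 2 + 3*a 2 + 3*a 0 + 3*a 0 + 3*a 0 + 3*a 1 + 3*a 1 + 3*a 1 + 4*a 0*a 1 + 3*1)*(3*(a 0+a 1+a 2)+7)"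
    by (rule ineq_012[where x0v="a 0 - 1" and x1v="a 1 - 1" and x2v="a 2 - 1"]) (use assms in auto)
  show ?thesis unfolding N S k by (intro conjI[OF _ i]) simp
qed

lemma ineq_024: fixes a0v x0v a2v x2v a4v x4v :: nat
  assumes "a0v = x0v+1" "a2v = x2v+1" "a4v = x4v+1"
  shows "(9*(a0v+a2v+a4v)+15)*(a0v*a2v + a0v*a2v + a0v*a2v*a4v + a0v*a4v + a2v + a2v + a2v*a4v + a0v + a0v + a0v*a4v + 1 + 1 + a4v + a4v + a0v + 1) < (3*a0v*a2v + 3*a0v*a2v + 4*a0v*a2v*a4v + 3*a0v*a4v + 3*a2v + 3*a2v + 4*a2v*a4v + 3*a0v + 3*a0v + 4*a0v*a4v + 2*1 + 2*1 + 3*a4v + 3*a4v + 3*a0v + 3*1)*(3*(a0v+a2v+a4v)+7)"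
  unfolding assms by (simp add: algebra_simps)

lemma LL_024: "LL {0,2,4} = [({0,2},1), ({0,2},1), ({0,2,4},1), ({0,4},1), ({2},2), ({2},2), ({2,4},2), ({0},2), ({0},2), ({0,4},2), ({},2), ({},2), ({4},2), ({4},2), ({0},2), ({},3)]"
  by code_simp

lemma case_024: fixes a :: "nat \<Rightarrow> nat"
  assumes "\<forall>v\<in>{0,2,4}. 1 \<le> a v"
  shows "0 < NL a (LL {0,2,4}) \<and> (9*(\<Sum>v\<in>{0,2,4}. a v)+15) * NL a (LL {0,2,4}) < SL a (LL {0,2,4}) * (3*(\<Sum>v\<in>{0,2,4}. a v)+7)"
proof -
  have N: "NL a (LL {0,2,4}) = a 0*a 2 + a 0*a 2 + a 0*a 2*a 4 + a 0*a 4 + a 2 + a 2 + a 2*a 4 + a 0 + a 0 + a 0*a 4 + 1 + 1 + a 4 + a 4 + a 0 + 1" unfolding LL_024 NL_def by (simp add: algebra_simps)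
  have S: "SL a (LL {0,2,4}) = 3*a 0*a 2 + 3*a 0*a 2 + 4*a 0*a 2*a 4 + 3*a 0*a 4 + 3*a 2 + 3*a 2 + 4*a 2*a 4 + 3*a 0 + 3*a 0 + 4*a 0*a 4 + 2*1 + 2*1 + 3*a 4 + 3*a 4 + 3*a 0 + 3*1" unfolding LL_024 SL_def by (simp add: algebra_simps)
  have k: "(\<Sum>v\<in>{0,2,4}. a v) = a 0+a 2+a 4" by simp
  have i: "(9*(a 0+a 2+a 4)+15)*(a 0*a 2 + a 0*a 2 + a 0*a 2*a 4 + a 0*a 4 + a 2 + a 2 + a 2*a 4 + a 0 + a 0 + a 0*a 4 + 1 + 1 + a 4 + a 4 + a 0 + 1) < (3*a 0*a 2 + 3*a 0*a 2 + 4*a 0*a 2*a 4 + 3*a 0*a 4 + 3*a 2 + 3*a 2 + 4*a 2*a 4 + 3*a 0 + 3*a 0 + 4*a 0*a 4 + 2*1 + 2*1 + 3*a 4 + 3*a 4 + 3*a 0 + 3*1)*(3*(a 0+a 2+a 4)+7)"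
    by (rule ineq_024[where x0v="a 0 - 1" and x2v="a 2 - 1" and x4v="a 4 - 1"]) (use assms in auto)
  show ?thesis unfolding N S k by (intro conjI[OF _ i]) simp
qed

lemma ineq_025: fixes a0v x0v a2v x2v a5v x5v :: nat
  assumes "a0v = x0v+1" "a2v = x2v+1" "a5v = x5v+1"
  shows "(9*(a0v+a2v+a5v)+15)*(a0v*a2v*a5v + a0v*a2v + a0v*a2v + a0v*a5v + a2v*a5v + a2v + a2v + a0v*a5v + a0v + a0v + a5v + 1 + 1 + a5v + a0v + 1) < (4*a0v*a2v*a5v + 3*a0v*a2v + 3*a0v*a2v + 3*a0v*a5v + 4*a2v*a5v + 3*a2v + 3*a2v + 4*a0v*a5v + 3*a0v + 3*a0v + 3*a5v + 2*1 + 2*1 + 3*a5v + 3*a0v + 3*1)*(3*(a0v+a2v+a5v)+7)"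
  unfolding assms by (simp add: algebra_simps)

lemma LL_025: "LL {0,2,5} = [({0,2,5},1), ({0,2},1), ({0,2},1), ({0,5},1), ({2,5},2), ({2},2), ({2},2), ({0,5},2), ({0},2), ({0},2), ({5},2), ({},2), ({},2), ({5},2), ({0},2), ({},3)]"
  by code_simp

lemma case_025: fixes a :: "nat \<Rightarrow> nat"
  assumes "\<forall>v\<in>{0,2,5}. 1 \<le> a v"
  shows "0 < NL a (LL {0,2,5}) \<and> (9*(\<Sum>v\<in>{0,2,5}. a v)+15) * NL a (LL {0,2,5}) < SL a (LL {0,2,5}) * (3*(\<Sum>v\<in>{0,2,5}. a v)+7)"
proof -
  have N: "NL a (LL {0,2,5}) = a 0*a 2*a 5 + a 0*a 2 + a 0*a 2 + a 0*a 5 + a 2*a 5 + a 2 + a 2 + a 0*a 5 + a 0 + a 0 + a 5 + 1 + 1 + a 5 + a 0 + 1" unfolding LL_025 NL_def by (simp add: algebra_simps)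
  have S: "SL a (LL {0,2,5}) = 4*a 0*a 2*a 5 + 3*a 0*a 2 + 3*a 0*a 2 + 3*a 0*a 5 + 4*a 2*a 5 + 3*a 2 + 3*a 2 + 4*a 0*a 5 + 3*a 0 + 3*a 0 + 3*a 5 + 2*1 + 2*1 + 3*a 5 + 3*a 0 + 3*1" unfolding LL_025 SL_def by (simp add: algebra_simps)
  have k: "(\<Sum>v\<in>{0,2,5}. a v) = a 0+a 2+a 5" by simp
  have i: "(9*(a 0+a 2+a 5)+15)*(a 0*a 2*a 5 + a 0*a 2 + a 0*a 2 + a 0*a 5 + a 2*a 5 + a 2 + a 2 + a 0*a 5 + a 0 + a 0 + a 5 + 1 + 1 + a 5 + a 0 + 1) < (4*a 0*a 2*a 5 + 3*a 0*a 2 + 3*a 0*a 2 + 3*a 0*a 5 + 4*a 2*a 5 + 3*a 2 + 3*a 2 + 4*a 0*a 5 + 3*a 0 + 3*a 0 + 3*a 5 + 2*1 + 2*1 + 3*a 5 + 3*a 0 + 3*1)*(3*(a 0+a 2+a 5)+7)"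
    by (rule ineq_025[where x0v="a 0 - 1" and x2v="a 2 - 1" and x5v="a 5 - 1"]) (use assms in auto)
  show ?thesis unfolding N S k by (intro conjI[OF _ i]) simp
qed

lemma ineq_124: fixes a1v x1v a2v x2v a4v x4v :: nat
  assumes "a1v = x1v+1" "a2v = x2v+1" "a4v = x4v+1"
  shows "(9*(a1v+a2v+a4v)+15)*(a1v*a2v + a1v*a2v + a1v*a2v*a4v + a1v*a4v + a2v + a2v + a2v*a4v + 1 + 1 + a4v + a1v + a1v + a1v*a4v + a4v + a1v + 1) < (3*a1v*a2v + 3*a1v*a2v + 4*a1v*a2v*a4v + 3*a1v*a4v + 3*a2v + 3*a2v + 4*a2v*a4v + 2*1 + 2*1 + 3*a4v + 3*a1v + 3*a1v + 4*a1v*a4v + 3*a4v + 3*a1v + 3*1)*(3*(a1v+a2v+a4v)+7)"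
  unfolding assms by (simp add: algebra_simps)

lemma LL_124: "LL {1,2,4} = [({1,2},1), ({1,2},1), ({1,2,4},1), ({1,4},1), ({2},2), ({2},2), ({2,4},2), ({},2), ({},2), ({4},2), ({1},2), ({1},2), ({1,4},2), ({4},2), ({1},2), ({},3)]"
  by code_simp

lemma case_124: fixes a :: "nat \<Rightarrow> nat"
  assumes "\<forall>v\<in>{1,2,4}. 1 \<le> a v"
  shows "0 < NL a (LL {1,2,4}) \<and> (9*(\<Sum>v\<in>{1,2,4}. a v)+15) * NL a (LL {1,2,4}) < SL a (LL {1,2,4}) * (3*(\<Sum>v\<in>{1,2,4}. a v)+7)"
proof -
  have N: "NL a (LL {1,2,4}) = a 1*a 2 + a 1*a 2 + a 1*a 2*a 4 + a 1*a 4 + a 2 + a 2 + a 2*a 4 + 1 + 1 + a 4 + a 1 + a 1 + a 1*a 4 + a 4 + a 1 + 1" unfolding LL_124 NL_def by (simp add: algebra_simps)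
  have S: "SL a (LL {1,2,4}) = 3*a 1*a 2 + 3*a 1*a 2 + 4*a 1*a 2*a 4 + 3*a 1*a 4 + 3*a 2 + 3*a 2 + 4*a 2*a 4 + 2*1 + 2*1 + 3*a 4 + 3*a 1 + 3*a 1 + 4*a 1*a 4 + 3*a 4 + 3*a 1 + 3*1" unfolding LL_124 SL_def by (simp add: algebra_simps)
  have k: "(\<Sum>v\<in>{1,2,4}. a v) = a 1+a 2+a 4" by simp
  have i: "(9*(a 1+a 2+a 4)+15)*(a 1*a 2 + a 1*a 2 + a 1*a 2*a 4 + a 1*a 4 + a 2 + a 2 + a 2*a 4 + 1 + 1 + a 4 + a 1 + a 1 + a 1*a 4 + a 4 + a 1 + 1) < (3*a 1*a 2 + 3*a 1*a 2 + 4*a 1*a 2*a 4 + 3*a 1*a 4 + 3*a 2 + 3*a 2 + 4*a 2*a 4 + 2*1 + 2*1 + 3*a 4 + 3*a 1 + 3*a 1 + 4*a 1*a 4 + 3*a 4 + 3*a 1 + 3*1)*(3*(a 1+a 2+a 4)+7)"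
    by (rule ineq_124[where x1v="a 1 - 1" and x2v="a 2 - 1" and x4v="a 4 - 1"]) (use assms in auto)
  show ?thesis unfolding N S k by (intro conjI[OF _ i]) simp
qed

lemma ineq_125: fixes a1v x1v a2v x2v a5v x5v :: nat
  assumes "a1v = x1v+1" "a2v = x2v+1" "a5v = x5v+1"
  shows "(9*(a1v+a2v+a5v)+15)*(a1v*a2v*a5v + a1v*a2v + a1v*a2v + a1v*a5v + a2v*a5v + a2v + a2v + a5v + 1 + 1 + a1v*a5v + a1v + a1v + a5v + a1v + 1) < (4*a1v*a2v*a5v + 3*a1v*a2v + 3*a1v*a2v + 3*a1v*a5v + 4*a2v*a5v + 3*a2v + 3*a2v + 3*a5v + 2*1 + 2*1 + 4*a1v*a5v + 3*a1v + 3*a1v + 3*a5v + 3*a1v + 3*1)*(3*(a1v+a2v+a5v)+7)"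
  unfolding assms by (simp add: algebra_simps)

lemma LL_125: "LL {1,2,5} = [({1,2,5},1), ({1,2},1), ({1,2},1), ({1,5},1), ({2,5},2), ({2},2), ({2},2), ({5},2), ({},2), ({},2), ({1,5},2), ({1},2), ({1},2), ({5},2), ({1},2), ({},3)]"
  by code_simp

lemma case_125: fixes a :: "nat \<Rightarrow> nat"
  assumes "\<forall>v\<in>{1,2,5}. 1 \<le> a v"
  shows "0 < NL a (LL {1,2,5}) \<and> (9*(\<Sum>v\<in>{1,2,5}. a v)+15) * NL a (LL {1,2,5}) < SL a (LL {1,2,5}) * (3*(\<Sum>v\<in>{1,2,5}. a v)+7)"
proof -
  have N: "NL a (LL {1,2,5}) = a 1*a 2*a 5 + a 1*a 2 + a 1*a 2 + a 1*a 5 + a 2*a 5 + a 2 + a 2 + a 5 + 1 + 1 + a 1*a 5 + a 1 + a 1 + a 5 + a 1 + 1" unfolding LL_125 NL_def by (simp add: algebra_simps)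
  have S: "SL a (LL {1,2,5}) = 4*a 1*a 2*a 5 + 3*a 1*a 2 + 3*a 1*a 2 + 3*a 1*a 5 + 4*a 2*a 5 + 3*a 2 + 3*a 2 + 3*a 5 + 2*1 + 2*1 + 4*a 1*a 5 + 3*a 1 + 3*a 1 + 3*a 5 + 3*a 1 + 3*1" unfolding LL_125 SL_def by (simp add: algebra_simps)
  have k: "(\<Sum>v\<in>{1,2,5}. a v) = a 1+a 2+a 5" by simp
  have i: "(9*(a 1+a 2+a 5)+15)*(a 1*a 2*a 5 + a 1*a 2 + a 1*a 2 + a 1*a 5 + a 2*a 5 + a 2 + a 2 + a 5 + 1 + 1 + a 1*a 5 + a 1 + a 1 + a 5 + a 1 + 1) < (4*a 1*a 2*a 5 + 3*a 1*a 2 + 3*a 1*a 2 + 3*a 1*a 5 + 4*a 2*a 5 + 3*a 2 + 3*a 2 + 3*a 5 + 2*1 + 2*1 + 4*a 1*a 5 + 3*a 1 + 3*a 1 + 3*a 5 + 3*a 1 + 3*1)*(3*(a 1+a 2+a 5)+7)"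
    by (rule ineq_125[where x1v="a 1 - 1" and x2v="a 2 - 1" and x5v="a 5 - 1"]) (use assms in auto)
  show ?thesis unfolding N S k by (intro conjI[OF _ i]) simp
qed

lemma ineq_245: fixes a2v x2v a4v x4v a5v x5v :: nat
  assumes "a2v = x2v+1" "a4v = x4v+1" "a5v = x5v+1"
  shows "(9*(a2v+a4v+a5v)+15)*(a2v*a4v*a5v + a4v*a5v + a4v*a5v + a2v*a5v + a2v + a2v*a4v + a5v + 1 + a4v + a5v + 1 + a4v + a4v*a5v + 1) < (4*a2v*a4v*a5v + 3*a4v*a5v + 3*a4v*a5v + 4*a2v*a5v + 3*a2v + 4*a2v*a4v + 3*a5v + 2*1 + 3*a4v + 3*a5v + 2*1 + 3*a4v + 4*a4v*a5v + 3*1)*(3*(a2v+a4v+a5v)+7)"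
  unfolding assms by (simp add: algebra_simps)

lemma LL_245: "LL {2,4,5} = [({2,4,5},1), ({4,5},1), ({4,5},1), ({2,5},2), ({2},2), ({2,4},2), ({5},2), ({},2), ({4},2), ({5},2), ({},2), ({4},2), ({4,5},2), ({},3)]"
  by code_simp

lemma case_245: fixes a :: "nat \<Rightarrow> nat"
  assumes "\<forall>v\<in>{2,4,5}. 1 \<le> a v"
  shows "0 < NL a (LL {2,4,5}) \<and> (9*(\<Sum>v\<in>{2,4,5}. a v)+15) * NL a (LL {2,4,5}) < SL a (LL {2,4,5}) * (3*(\<Sum>v\<in>{2,4,5}. a v)+7)"
proof -
  have N: "NL a (LL {2,4,5}) = a 2*a 4*a 5 + a 4*a 5 + a 4*a 5 + a 2*a 5 + a 2 + a 2*a 4 + a 5 + 1 + a 4 + a 5 + 1 + a 4 + a 4*a 5 + 1" unfolding LL_245 NL_def by (simp add: algebra_simps)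
  have S: "SL a (LL {2,4,5}) = 4*a 2*a 4*a 5 + 3*a 4*a 5 + 3*a 4*a 5 + 4*a 2*a 5 + 3*a 2 + 4*a 2*a 4 + 3*a 5 + 2*1 + 3*a 4 + 3*a 5 + 2*1 + 3*a 4 + 4*a 4*a 5 + 3*1" unfolding LL_245 SL_def by (simp add: algebra_simps)
  have k: "(\<Sum>v\<in>{2,4,5}. a v) = a 2+a 4+a 5" by simp
  have i: "(9*(a 2+a 4+a 5)+15)*(a 2*a 4*a 5 + a 4*a 5 + a 4*a 5 + a 2*a 5 + a 2 + a 2*a 4 + a 5 + 1 + a 4 + a 5 + 1 + a 4 + a 4*a 5 + 1) < (4*a 2*a 4*a 5 + 3*a 4*a 5 + 3*a 4*a 5 + 4*a 2*a 5 + 3*a 2 + 4*a 2*a 4 + 3*a 5 + 2*1 + 3*a 4 + 3*a 5 + 2*1 + 3*a 4 + 4*a 4*a 5 + 3*1)*(3*(a 2+a 4+a 5)+7)"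
    by (rule ineq_245[where x2v="a 2 - 1" and x4v="a 4 - 1" and x5v="a 5 - 1"]) (use assms in auto)
  show ?thesis unfolding N S k by (intro conjI[OF _ i]) simp
qed

lemma ineq_0124: fixes a0v x0v a1v x1v a2v x2v a4v x4v :: nat
  assumes "a0v = x0v+1" "a1v = x1v+1" "a2v = x2v+1" "a4v = x4v+1"
  shows "(9*(a0v+a1v+a2v+a4v)+15)*(a0v*a1v*a2v + a0v*a1v*a2v + a0v*a1v*a2v*a4v + a0v*a1v*a4v + a2v + a2v + a2v*a4v + a0v + a0v + a0v*a4v + a1v + a1v + a1v*a4v + a4v + a0v*a1v + 1) < (4*a0v*a1v*a2v + 4*a0v*a1v*a2v + 5*a0v*a1v*a2v*a4v + 4*a0v*a1v*a4v + 3*a2v + 3*a2v + 4*a2v*a4v + 3*a0v + 3*a0v + 4*a0v*a4v + 3*a1v + 3*a1v + 4*a1v*a4v + 3*a4v + 4*a0v*a1v + 3*1)*(3*(a0v+a1v+a2v+a4v)+7)"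
  unfolding assms by (simp add: algebra_simps)

lemma LL_0124: "LL {0,1,2,4} = [({0,1,2},1), ({0,1,2},1), ({0,1,2,4},1), ({0,1,4},1), ({2},2), ({2},2), ({2,4},2), ({0},2), ({0},2), ({0,4},2), ({1},2), ({1},2), ({1,4},2), ({4},2), ({0,1},2), ({},3)]"
  by code_simp

lemma case_0124: fixes a :: "nat \<Rightarrow> nat"
  assumes "\<forall>v\<in>{0,1,2,4}. 1 \<le> a v"
  shows "0 < NL a (LL {0,1,2,4}) \<and> (9*(\<Sum>v\<in>{0,1,2,4}. a v)+15) * NL a (LL {0,1,2,4}) < SL a (LL {0,1,2,4}) * (3*(\<Sum>v\<in>{0,1,2,4}. a v)+7)"
proof -
  have N: "NL a (LL {0,1,2,4}) = a 0*a 1*a 2 + a 0*a 1*a 2 + a 0*a 1*a 2*a 4 + a 0*a 1*a 4 + a 2 + a 2 + a 2*a 4 + a 0 + a 0 + a 0*a 4 + a 1 + a 1 + a 1*a 4 + a 4 + a 0*a 1 + 1" unfolding LL_0124 NL_def by (simp add: algebra_simps)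
  have S: "SL a (LL {0,1,2,4}) = 4*a 0*a 1*a 2 + 4*a 0*a 1*a 2 + 5*a 0*a 1*a 2*a 4 + 4*a 0*a 1*a 4 + 3*a 2 + 3*a 2 + 4*a 2*a 4 + 3*a 0 + 3*a 0 + 4*a 0*a 4 + 3*a 1 + 3*a 1 + 4*a 1*a 4 + 3*a 4 + 4*a 0*a 1 + 3*1" unfolding LL_0124 SL_def by (simp add: algebra_simps)
  have k: "(\<Sum>v\<in>{0,1,2,4}. a v) = a 0+a 1+a 2+a 4" by simp
  have i: "(9*(a 0+a 1+a 2+a 4)+15)*(a 0*a 1*a 2 + a 0*a 1*a 2 + a 0*a 1*a 2*a 4 + a 0*a 1*a 4 + a 2 + a 2 + a 2*a 4 + a 0 + a 0 + a 0*a 4 + a 1 + a 1 + a 1*a 4 + a 4 + a 0*a 1 + 1) < (4*a 0*a 1*a 2 + 4*a 0*a 1*a 2 + 5*a 0*a 1*a 2*a 4 + 4*a 0*a 1*a 4 + 3*a 2 + 3*a 2 + 4*a 2*a 4 + 3*a 0 + 3*a 0 + 4*a 0*a 4 + 3*a 1 + 3*a 1 + 4*a 1*a 4 + 3*a 4 + 4*a 0*a 1 + 3*1)*(3*(a 0+a 1+a 2+a 4)+7)"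
    by (rule ineq_0124[where x0v="a 0 - 1" and x1v="a 1 - 1" and x2v="a 2 - 1" and x4v="a 4 - 1"]) (use assms in auto)
  show ?thesis unfolding N S k by (intro conjI[OF _ i]) simp
qed

lemma ineq_0125: fixes a0v x0v a1v x1v a2v x2v a5v x5v :: nat
  assumes "a0v = x0v+1" "a1v = x1v+1" "a2v = x2v+1" "a5v = x5v+1"
  shows "(9*(a0v+a1v+a2v+a5v)+15)*(a0v*a1v*a2v*a5v + a0v*a1v*a2v + a0v*a1v*a2v + a0v*a1v*a5v + a2v*a5v + a2v + a2v + a0v*a5v + a0v + a0v + a1v*a5v + a1v + a1v + a5v + a0v*a1v + 1) < (5*a0v*a1v*a2v*a5v + 4*a0v*a1v*a2v + 4*a0v*a1v*a2v + 4*a0v*a1v*a5v + 4*a2v*a5v + 3*a2v + 3*a2v + 4*a0v*a5v + 3*a0v + 3*a0v + 4*a1v*a5v + 3*a1v + 3*a1v + 3*a5v + 4*a0v*a1v + 3*1)*(3*(a0v+a1v+a2v+a5v)+7)"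
  unfolding assms by (simp add: algebra_simps)

lemma LL_0125: "LL {0,1,2,5} = [({0,1,2,5},1), ({0,1,2},1), ({0,1,2},1), ({0,1,5},1), ({2,5},2), ({2},2), ({2},2), ({0,5},2), ({0},2), ({0},2), ({1,5},2), ({1},2), ({1},2), ({5},2), ({0,1},2), ({},3)]"
  by code_simp

lemma case_0125: fixes a :: "nat \<Rightarrow> nat"
  assumes "\<forall>v\<in>{0,1,2,5}. 1 \<le> a v"
  shows "0 < NL a (LL {0,1,2,5}) \<and> (9*(\<Sum>v\<in>{0,1,2,5}. a v)+15) * NL a (LL {0,1,2,5}) < SL a (LL {0,1,2,5}) * (3*(\<Sum>v\<in>{0,1,2,5}. a v)+7)"
proof -
  have N: "NL a (LL {0,1,2,5}) = a 0*a 1*a 2*a 5 + a 0*a 1*a 2 + a 0*a 1*a 2 + a 0*a 1*a 5 + a 2*a 5 + a 2 + a 2 + a 0*a 5 + a 0 + a 0 + a 1*a 5 + a 1 + a 1 + a 5 + a 0*a 1 + 1" unfolding LL_0125 NL_def by (simp add: algebra_simps)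
  have S: "SL a (LL {0,1,2,5}) = 5*a 0*a 1*a 2*a 5 + 4*a 0*a 1*a 2 + 4*a 0*a 1*a 2 + 4*a 0*a 1*a 5 + 4*a 2*a 5 + 3*a 2 + 3*a 2 + 4*a 0*a 5 + 3*a 0 + 3*a 0 + 4*a 1*a 5 + 3*a 1 + 3*a 1 + 3*a 5 + 4*a 0*a 1 + 3*1" unfolding LL_0125 SL_def by (simp add: algebra_simps)
  have k: "(\<Sum>v\<in>{0,1,2,5}. a v) = a 0+a 1+a 2+a 5" by simp
  have i: "(9*(a 0+a 1+a 2+a 5)+15)*(a 0*a 1*a 2*a 5 + a 0*a 1*a 2 + a 0*a 1*a 2 + a 0*a 1*a 5 + a 2*a 5 + a 2 + a 2 + a 0*a 5 + a 0 + a 0 + a 1*a 5 + a 1 + a 1 + a 5 + a 0*a 1 + 1) < (5*a 0*a 1*a 2*a 5 + 4*a 0*a 1*a 2 + 4*a 0*a 1*a 2 + 4*a 0*a 1*a 5 + 4*a 2*a 5 + 3*a 2 + 3*a 2 + 4*a 0*a 5 + 3*a 0 + 3*a 0 + 4*a 1*a 5 + 3*a 1 + 3*a 1 + 3*a 5 + 4*a 0*a 1 + 3*1)*(3*(a 0+a 1+a 2+a 5)+7)"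
    by (rule ineq_0125[where x0v="a 0 - 1" and x1v="a 1 - 1" and x2v="a 2 - 1" and x5v="a 5 - 1"]) (use assms in auto)
  show ?thesis unfolding N S k by (intro conjI[OF _ i]) simp
qed

lemma ineq_0245: fixes a0v x0v a2v x2v a4v x4v a5v x5v :: nat
  assumes "a0v = x0v+1" "a2v = x2v+1" "a4v = x4v+1" "a5v = x5v+1"
  shows "(9*(a0v+a2v+a4v+a5v)+15)*(a0v*a2v*a4v*a5v + a2v*a4v*a5v + a0v*a4v*a5v + a4v*a5v + a0v*a2v*a5v + a0v*a2v + a0v*a2v*a4v + a0v*a4v*a5v + a2v*a5v + a2v + a2v*a4v + a0v*a5v + a0v + a0v*a4v + a5v + 1 + a4v + a4v*a5v + a0v + 1) < (4*a0v*a2v*a4v*a5v + 4*a2v*a4v*a5v + 4*a0v*a4v*a5v + 3*a4v*a5v + 4*a0v*a2v*a5v + 3*a0v*a2v + 4*a0v*a2v*a4v + 4*a0v*a4v*a5v + 4*a2v*a5v + 3*a2v + 4*a2v*a4v + 4*a0v*a5v + 3*a0v + 4*a0v*a4v + 3*a5v + 2*1 + 3*a4v + 4*a4v*a5v + 3*a0v + 3*1)*(3*(a0v+a2v+a4v+a5v)+7)"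
  unfolding assms by (simp add: algebra_simps)

lemma LL_0245: "LL {0,2,4,5} = [({0,2,4,5},0), ({2,4,5},1), ({0,4,5},1), ({4,5},1), ({0,2,5},1), ({0,2},1), ({0,2,4},1), ({0,4,5},1), ({2,5},2), ({2},2), ({2,4},2), ({0,5},2), ({0},2), ({0,4},2), ({5},2), ({},2), ({4},2), ({4,5},2), ({0},2), ({},3)]"
  by code_simp

lemma case_0245: fixes a :: "nat \<Rightarrow> nat"
  assumes "\<forall>v\<in>{0,2,4,5}. 1 \<le> a v"
  shows "0 < NL a (LL {0,2,4,5}) \<and> (9*(\<Sum>v\<in>{0,2,4,5}. a v)+15) * NL a (LL {0,2,4,5}) < SL a (LL {0,2,4,5}) * (3*(\<Sum>v\<in>{0,2,4,5}. a v)+7)"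
proof -
  have N: "NL a (LL {0,2,4,5}) = a 0*a 2*a 4*a 5 + a 2*a 4*a 5 + a 0*a 4*a 5 + a 4*a 5 + a 0*a 2*a 5 + a 0*a 2 + a 0*a 2*a 4 + a 0*a 4*a 5 + a 2*a 5 + a 2 + a 2*a 4 + a 0*a 5 + a 0 + a 0*a 4 + a 5 + 1 + a 4 + a 4*a 5 + a 0 + 1" unfolding LL_0245 NL_def by (simp add: algebra_simps)
  have S: "SL a (LL {0,2,4,5}) = 4*a 0*a 2*a 4*a 5 + 4*a 2*a 4*a 5 + 4*a 0*a 4*a 5 + 3*a 4*a 5 + 4*a 0*a 2*a 5 + 3*a 0*a 2 + 4*a 0*a 2*a 4 + 4*a 0*a 4*a 5 + 4*a 2*a 5 + 3*a 2 + 4*a 2*a 4 + 4*a 0*a 5 + 3*a 0 + 4*a 0*a 4 + 3*a 5 + 2*1 + 3*a 4 + 4*a 4*a 5 + 3*a 0 + 3*1" unfolding LL_0245 SL_def by (simp add: algebra_simps)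
  have k: "(\<Sum>v\<in>{0,2,4,5}. a v) = a 0+a 2+a 4+a 5" by simp
  have i: "(9*(a 0+a 2+a 4+a 5)+15)*(a 0*a 2*a 4*a 5 + a 2*a 4*a 5 + a 0*a 4*a 5 + a 4*a 5 + a 0*a 2*a 5 + a 0*a 2 + a 0*a 2*a 4 + a 0*a 4*a 5 + a 2*a 5 + a 2 + a 2*a 4 + a 0*a 5 + a 0 + a 0*a 4 + a 5 + 1 + a 4 + a 4*a 5 + a 0 + 1) < (4*a 0*a 2*a 4*a 5 + 4*a 2*a 4*a 5 + 4*a 0*a 4*a 5 + 3*a 4*a 5 + 4*a 0*a 2*a 5 + 3*a 0*a 2 + 4*a 0*a 2*a 4 + 4*a 0*a 4*a 5 + 4*a 2*a 5 + 3*a 2 + 4*a 2*a 4 + 4*a 0*a 5 + 3*a 0 + 4*a 0*a 4 + 3*a 5 + 2*1 + 3*a 4 + 4*a 4*a 5 + 3*a 0 + 3*1)*(3*(a 0+a 2+a 4+a 5)+7)"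
    by (rule ineq_0245[where x0v="a 0 - 1" and x2v="a 2 - 1" and x4v="a 4 - 1" and x5v="a 5 - 1"]) (use assms in auto)
  show ?thesis unfolding N S k by (intro conjI[OF _ i]) simp
qed

lemma ineq_1245: fixes a1v x1v a2v x2v a4v x4v a5v x5v :: nat
  assumes "a1v = x1v+1" "a2v = x2v+1" "a4v = x4v+1" "a5v = x5v+1"
  shows "(9*(a1v+a2v+a4v+a5v)+15)*(a1v*a2v*a4v*a5v + a2v*a4v*a5v + a4v*a5v + a1v*a4v*a5v + a1v*a2v*a5v + a1v*a2v + a1v*a2v*a4v + a1v*a4v*a5v + a2v*a5v + a2v + a2v*a4v + a5v + 1 + a4v + a1v*a5v + a1v + a1v*a4v + a4v*a5v + a1v + 1) < (4*a1v*a2v*a4v*a5v + 4*a2v*a4v*a5v + 3*a4v*a5v + 4*a1v*a4v*a5v + 4*a1v*a2v*a5v + 3*a1v*a2v + 4*a1v*a2v*a4v + 4*a1v*a4v*a5v + 4*a2v*a5v + 3*a2v + 4*a2v*a4v + 3*a5v + 2*1 + 3*a4v + 4*a1v*a5v + 3*a1v + 4*a1v*a4v + 4*a4v*a5v + 3*a1v + 3*1)*(3*(a1v+a2v+a4v+a5v)+7)"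
  unfolding assms by (simp add: algebra_simps)

lemma LL_1245: "LL {1,2,4,5} = [({1,2,4,5},0), ({2,4,5},1), ({4,5},1), ({1,4,5},1), ({1,2,5},1), ({1,2},1), ({1,2,4},1), ({1,4,5},1), ({2,5},2), ({2},2), ({2,4},2), ({5},2), ({},2), ({4},2), ({1,5},2), ({1},2), ({1,4},2), ({4,5},2), ({1},2), ({},3)]"
  by code_simp

lemma case_1245: fixes a :: "nat \<Rightarrow> nat"
  assumes "\<forall>v\<in>{1,2,4,5}. 1 \<le> a v"
  shows "0 < NL a (LL {1,2,4,5}) \<and> (9*(\<Sum>v\<in>{1,2,4,5}. a v)+15) * NL a (LL {1,2,4,5}) < SL a (LL {1,2,4,5}) * (3*(\<Sum>v\<in>{1,2,4,5}. a v)+7)"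
proof -
  have N: "NL a (LL {1,2,4,5}) = a 1*a 2*a 4*a 5 + a 2*a 4*a 5 + a 4*a 5 + a 1*a 4*a 5 + a 1*a 2*a 5 + a 1*a 2 + a 1*a 2*a 4 + a 1*a 4*a 5 + a 2*a 5 + a 2 + a 2*a 4 + a 5 + 1 + a 4 + a 1*a 5 + a 1 + a 1*a 4 + a 4*a 5 + a 1 + 1" unfolding LL_1245 NL_def by (simp add: algebra_simps)
  have S: "SL a (LL {1,2,4,5}) = 4*a 1*a 2*a 4*a 5 + 4*a 2*a 4*a 5 + 3*a 4*a 5 + 4*a 1*a 4*a 5 + 4*a 1*a 2*a 5 + 3*a 1*a 2 + 4*a 1*a 2*a 4 + 4*a 1*a 4*a 5 + 4*a 2*a 5 + 3*a 2 + 4*a 2*a 4 + 3*a 5 + 2*1 + 3*a 4 + 4*a 1*a 5 + 3*a 1 + 4*a 1*a 4 + 4*a 4*a 5 + 3*a 1 + 3*1" unfolding LL_1245 SL_def by (simp add: algebra_simps)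
  have k: "(\<Sum>v\<in>{1,2,4,5}. a v) = a 1+a 2+a 4+a 5" by simp
  have i: "(9*(a 1+a 2+a 4+a 5)+15)*(a 1*a 2*a 4*a 5 + a 2*a 4*a 5 + a 4*a 5 + a 1*a 4*a 5 + a 1*a 2*a 5 + a 1*a 2 + a 1*a 2*a 4 + a 1*a 4*a 5 + a 2*a 5 + a 2 + a 2*a 4 + a 5 + 1 + a 4 + a 1*a 5 + a 1 + a 1*a 4 + a 4*a 5 + a 1 + 1) < (4*a 1*a 2*a 4*a 5 + 4*a 2*a 4*a 5 + 3*a 4*a 5 + 4*a 1*a 4*a 5 + 4*a 1*a 2*a 5 + 3*a 1*a 2 + 4*a 1*a 2*a 4 + 4*a 1*a 4*a 5 + 4*a 2*a 5 + 3*a 2 + 4*a 2*a 4 + 3*a 5 + 2*1 + 3*a 4 + 4*a 1*a 5 + 3*a 1 + 4*a 1*a 4 + 4*a 4*a 5 + 3*a 1 + 3*1)*(3*(a 1+a 2+a 4+a 5)+7)"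
    by (rule ineq_1245[where x1v="a 1 - 1" and x2v="a 2 - 1" and x4v="a 4 - 1" and x5v="a 5 - 1"]) (use assms in auto)
  show ?thesis unfolding N S k by (intro conjI[OF _ i]) simp
qed

lemma ineq_01245: fixes a0v x0v a1v x1v a2v x2v a4v x4v a5v x5v :: nat
  assumes "a0v = x0v+1" "a1v = x1v+1" "a2v = x2v+1" "a4v = x4v+1" "a5v = x5v+1"
  shows "(9*(a0v+a1v+a2v+a4v+a5v)+15)*(a0v*a1v*a2v*a4v*a5v + a2v*a4v*a5v + a0v*a4v*a5v + a1v*a4v*a5v + a0v*a1v*a2v*a5v + a0v*a1v*a2v + a0v*a1v*a2v*a4v + a0v*a1v*a4v*a5v + a2v*a5v + a2v + a2v*a4v + a0v*a5v + a0v + a0v*a4v + a1v*a5v + a1v + a1v*a4v + a4v*a5v + a0v*a1v + 1) < (5*a0v*a1v*a2v*a4v*a5v + 4*a2v*a4v*a5v + 4*a0v*a4v*a5v + 4*a1v*a4v*a5v + 5*a0v*a1v*a2v*a5v + 4*a0v*a1v*a2v + 5*a0v*a1v*a2v*a4v + 5*a0v*a1v*a4v*a5v + 4*a2v*a5v + 3*a2v + 4*a2v*a4v + 4*a0v*a5v + 3*a0v + 4*a0v*a4v + 4*a1v*a5v + 3*a1v + 4*a1v*a4v + 4*a4v*a5v + 4*a0v*a1v + 3*1)*(3*(a0v+a1v+a2v+a4v+a5v)+7)"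
  unfolding assms by (simp add: algebra_simps)

lemma LL_01245: "LL {0,1,2,4,5} = [({0,1,2,4,5},0), ({2,4,5},1), ({0,4,5},1), ({1,4,5},1), ({0,1,2,5},1), ({0,1,2},1), ({0,1,2,4},1), ({0,1,4,5},1), ({2,5},2), ({2},2), ({2,4},2), ({0,5},2), ({0},2), ({0,4},2), ({1,5},2), ({1},2), ({1,4},2), ({4,5},2), ({0,1},2), ({},3)]"
  by code_simp

lemma case_01245: fixes a :: "nat \<Rightarrow> nat"
  assumes "\<forall>v\<in>{0,1,2,4,5}. 1 \<le> a v"
  shows "0 < NL a (LL {0,1,2,4,5}) \<and> (9*(\<Sum>v\<in>{0,1,2,4,5}. a v)+15) * NL a (LL {0,1,2,4,5}) < SL a (LL {0,1,2,4,5}) * (3*(\<Sum>v\<in>{0,1,2,4,5}. a v)+7)"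
proof -
  have N: "NL a (LL {0,1,2,4,5}) = a 0*a 1*a 2*a 4*a 5 + a 2*a 4*a 5 + a 0*a 4*a 5 + a 1*a 4*a 5 + a 0*a 1*a 2*a 5 + a 0*a 1*a 2 + a 0*a 1*a 2*a 4 + a 0*a 1*a 4*a 5 + a 2*a 5 + a 2 + a 2*a 4 + a 0*a 5 + a 0 + a 0*a 4 + a 1*a 5 + a 1 + a 1*a 4 + a 4*a 5 + a 0*a 1 + 1" unfolding LL_01245 NL_def by (simp add: algebra_simps)
  have S: "SL a (LL {0,1,2,4,5}) = 5*a 0*a 1*a 2*a 4*a 5 + 4*a 2*a 4*a 5 + 4*a 0*a 4*a 5 + 4*a 1*a 4*a 5 + 5*a 0*a 1*a 2*a 5 + 4*a 0*a 1*a 2 + 5*a 0*a 1*a 2*a 4 + 5*a 0*a 1*a 4*a 5 + 4*a 2*a 5 + 3*a 2 + 4*a 2*a 4 + 4*a 0*a 5 + 3*a 0 + 4*a 0*a 4 + 4*a 1*a 5 + 3*a 1 + 4*a 1*a 4 + 4*a 4*a 5 + 4*a 0*a 1 + 3*1" unfolding LL_01245 SL_def by (simp add: algebra_simps)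
  have k: "(\<Sum>v\<in>{0,1,2,4,5}. a v) = a 0+a 1+a 2+a 4+a 5" by simp
  have i: "(9*(a 0+a 1+a 2+a 4+a 5)+15)*(a 0*a 1*a 2*a 4*a 5 + a 2*a 4*a 5 + a 0*a 4*a 5 + a 1*a 4*a 5 + a 0*a 1*a 2*a 5 + a 0*a 1*a 2 + a 0*a 1*a 2*a 4 + a 0*a 1*a 4*a 5 + a 2*a 5 + a 2 + a 2*a 4 + a 0*a 5 + a 0 + a 0*a 4 + a 1*a 5 + a 1 + a 1*a 4 + a 4*a 5 + a 0*a 1 + 1) < (5*a 0*a 1*a 2*a 4*a 5 + 4*a 2*a 4*a 5 + 4*a 0*a 4*a 5 + 4*a 1*a 4*a 5 + 5*a 0*a 1*a 2*a 5 + 4*a 0*a 1*a 2 + 5*a 0*a 1*a 2*a 4 + 5*a 0*a 1*a 4*a 5 + 4*a 2*a 5 + 3*a 2 + 4*a 2*a 4 + 4*a 0*a 5 + 3*a 0 + 4*a 0*a 4 + 4*a 1*a 5 + 3*a 1 + 4*a 1*a 4 + 4*a 4*a 5 + 4*a 0*a 1 + 3*1)*(3*(a 0+a 1+a 2+a 4+a 5)+7)"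
    by (rule ineq_01245[where x0v="a 0 - 1" and x1v="a 1 - 1" and x2v="a 2 - 1" and x4v="a 4 - 1" and x5v="a 5 - 1"]) (use assms in auto)
  show ?thesis unfolding N S k by (intro conjI[OF _ i]) simp
qed

lemma LL_2: "LL {2} = [({2},2), ({2},2), ({2},2), ({},2), ({},2), ({},2), ({},2), ({},2), ({},2), ({},3)]"
  by code_simp

lemma NT: "NL a (LL {2}) = 3 * a 2 + 7" unfolding LL_2 NL_def by simp
lemma ST: "SL a (LL {2}) = 9 * a 2 + 15" unfolding LL_2 SL_def by simp

lemma all_cases:
  fixes a :: "nat \<Rightarrow> nat" and P :: "nat set"
  assumes "P \<subseteq> {0..5}" "2 \<in> P" "3 \<notin> P" "P \<inter> {0,1,4,5} \<noteq> {}" "\<forall>v\<in>P. 1 \<le> a v"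
  shows "0 < NL a (LL P) \<and> (9*(\<Sum>v\<in>P. a v)+15) * NL a (LL P) < SL a (LL P) * (3*(\<Sum>v\<in>P. a v)+7)"
proof -
  have Pchar: "x = 0 \<or> x = 1 \<or> x = 2 \<or> x = 4 \<or> x = 5" if "x \<in> P" for x
  proof -
    have "x \<le> 5" "x \<noteq> 3" using that assms(1,3) by auto
    thus ?thesis by arith
  qed
  show ?thesis
  proof (cases "0 \<in> P")
    case h0: True
    show ?thesis
    proof (cases "1 \<in> P")
      case h1: True
      show ?thesis
      proof (cases "4 \<in> P")
        case h4: True
        show ?thesis
        proof (cases "5 \<in> P")
          case h5: True
          have eq: "P = {0,1,2,4,5}" using Pchar assms(2) h0 h1 h4 h5 by auto
          show ?thesis unfolding eq by (rule case_01245) (use assms(5) eq in simp)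
        next
          case h5: False
          have eq: "P = {0,1,2,4}" using Pchar assms(2) h0 h1 h4 h5 by auto
          show ?thesis unfolding eq by (rule case_0124) (use assms(5) eq in simp)
        qed
      next
        case h4: False
        show ?thesis
        proof (cases "5 \<in> P")
          case h5: True
          have eq: "P = {0,1,2,5}" using Pchar assms(2) h0 h1 h4 h5 by auto
          show ?thesis unfolding eq by (rule case_0125) (use assms(5) eq in simp)
        next
          case h5: False
          have eq: "P = {0,1,2}" using Pchar assms(2) h0 h1 h4 h5 by auto
          show ?thesis unfolding eq by (rule case_012) (use assms(5) eq in simp)
        qed
      qed
    next
      case h1: False
      show ?thesis
      proof (cases "4 \<in> P")
        case h4: True
        show ?thesis
        proof (cases "5 \<in> P")
          case h5: True
          have eq: "P = {0,2,4,5}" using Pchar assms(2) h0 h1 h4 h5 by auto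
          show ?thesis unfolding eq by (rule case_0245) (use assms(5) eq in simp)
        next
          case h5: False
          have eq: "P = {0,2,4}" using Pchar assms(2) h0 h1 h4 h5 by auto
          show ?thesis unfolding eq by (rule case_024) (use assms(5) eq in simp)
        qed
      next
        case h4: False
        show ?thesis
        proof (cases "5 \<in> P")
          case h5: True
          have eq: "P = {0,2,5}" using Pchar assms(2) h0 h1 h4 h5 by auto
          show ?thesis unfolding eq by (rule case_025) (use assms(5) eq in simp)
        next
          case h5: False
          have eq: "P = {0,2}" using Pchar assms(2) h0 h1 h4 h5 by auto
          show ?thesis unfolding eq by (rule case_02) (use assms(5) eq in simp)
        qed
      qed
    qed
  next
    case h0: False
    show ?thesis
    proof (cases "1 \<in> P")
      case h1: True
      show ?thesis
      proof (cases "4 \<in> P")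
        case h4: True
        show ?thesis
        proof (cases "5 \<in> P")
          case h5: True
          have eq: "P = {1,2,4,5}" using Pchar assms(2) h0 h1 h4 h5 by auto
          show ?thesis unfolding eq by (rule case_1245) (use assms(5) eq in simp)
        next
          case h5: False
          have eq: "P = {1,2,4}" using Pchar assms(2) h0 h1 h4 h5 by auto
          show ?thesis unfolding eq by (rule case_124) (use assms(5) eq in simp)
        qed
      next
        case h4: False
        show ?thesis
        proof (cases "5 \<in> P")
          case h5: True
          have eq: "P = {1,2,5}" using Pchar assms(2) h0 h1 h4 h5 by auto
          show ?thesis unfolding eq by (rule case_125) (use assms(5) eq in simp)
        next
          case h5: False
          have eq: "P = {1,2}" using Pchar assms(2) h0 h1 h4 h5 by auto
          show ?thesis unfolding eq by (rule case_12) (use assms(5) eq in simp)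
        qed
      qed
    next
      case h1: False
      show ?thesis
      proof (cases "4 \<in> P")
        case h4: True
        show ?thesis
        proof (cases "5 \<in> P")
          case h5: True
          have eq: "P = {2,4,5}" using Pchar assms(2) h0 h1 h4 h5 by auto
          show ?thesis unfolding eq by (rule case_245) (use assms(5) eq in simp)
        next
          case h5: False
          have eq: "P = {2,4}" using Pchar assms(2) h0 h1 h4 h5 by auto
          show ?thesis unfolding eq by (rule case_24) (use assms(5) eq in simp)
        qed
      next
        case h4: False
        show ?thesis
        proof (cases "5 \<in> P")
          case h5: True
          have eq: "P = {2,5}" using Pchar assms(2) h0 h1 h4 h5 by auto
          show ?thesis unfolding eq by (rule case_25) (use assms(5) eq in simp)
        next
          case h5: False
          show ?thesis using assms(4) h0 h1 h4 h5 by auto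
        qed
      qed
    qed
  qed
qed

theorem lemma4p4:
  fixes n :: nat and p :: "nat \<Rightarrow> nat"
  assumes "n \<ge> 7"
    and "\<forall>i. 6 \<le> i \<and> i < n \<longrightarrow> p i \<in> {0,1,2,3,4,5}"
    and "\<exists>i. 6 \<le> i \<and> i < n \<and> p i = 2"
    and "\<forall>i. 6 \<le> i \<and> i < n \<longrightarrow> p i \<noteq> 3"
    and "\<exists>i. 6 \<le> i \<and> i < n \<and> p i \<in> {0,1,4,5}"
  shows "avm (pendant_graph n p) > avm (T1_33 n)"
proof -
  have lv: "\<forall>i. 6 \<le> i \<and> i < n \<longrightarrow> p i \<le> 5" using assms(2) by auto
  define a where "a = (\<lambda>v. card (Lf n p v))"
  define P where "P = PP n p"
  have Psub: "P \<subseteq> {0..5}" using PP_sub[OF lv] P_def by simp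
  have h2: "2 \<in> P" using assms(3) unfolding P_def PP_def Lf_def by auto
  have h3: "3 \<notin> P" using assms(4) unfolding P_def PP_def Lf_def by auto
  have hex: "P \<inter> {0,1,4,5} \<noteq> {}" using assms(5) unfolding P_def PP_def Lf_def by auto
  have apos: "\<forall>v\<in>P. 1 \<le> a v"
  proof
    fix v assume "v \<in> P"
    hence "Lf n p v \<noteq> {}" unfolding P_def PP_def by simp
    thus "1 \<le> a v" unfolding a_def using Lf_fin[OF lv, of v]
      by (simp add: Suc_le_eq card_gt_0_iff)
  qed
  have k: "(\<Sum>v\<in>P. a v) = n - 6" using sum_Lf[OF lv] unfolding a_def P_def .
  have main: "0 < NL a (LL P) \<and> (9*(\<Sum>v\<in>P. a v)+15) * NL a (LL P) < SL a (LL P) * (3*(\<Sum>v\<in>P. a v)+7)"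
    by (rule all_cases[OF Psub h2 h3 hex apos])
  hence m1: "0 < NL a (LL P)" and m2: "(9*(n-6)+15) * NL a (LL P) < SL a (LL P) * (3*(n-6)+7)"
    unfolding k by auto
  have avG: "avm (pendant_graph n p) = real (SL a (LL P)) / real (NL a (LL P))"
    using avm_eq[OF lv] unfolding a_def P_def .
  have lT: "\<forall>i. 6 \<le> i \<and> i < n \<longrightarrow> (\<lambda>_. 2::nat) i \<le> 5" by simp
  have PT: "PP n (\<lambda>_. 2) = {2}"
  proof -
    have "6 \<in> Lf n (\<lambda>_. 2) 2" unfolding Lf_def using assms(1) by simp
    thus ?thesis unfolding PP_def Lf_def by auto
  qed
  have aT: "card (Lf n (\<lambda>_. 2) 2) = n - 6"
  proof -
    have "Lf n (\<lambda>_. 2) 2 = {6..<n}" unfolding Lf_def by auto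
    thus ?thesis by simp
  qed
  have avT: "avm (T1_33 n) = real (9*(n-6)+15) / real (3*(n-6)+7)"
    unfolding T1_33_def avm_eq[OF lT] PT NT ST aT ..
  have ri: "real (9*(n-6)+15) * real (NL a (LL P)) < real (SL a (LL P)) * real (3*(n-6)+7)"
    using m2 by (metis of_nat_less_iff of_nat_mult)
  have q1: "0 < real (NL a (LL P))" using m1 by simp
  have q2: "0 < real (3*(n-6)+7)" by simp
  have "real (9*(n-6)+15) / real (3*(n-6)+7) < real (SL a (LL P)) / real (NL a (LL P))"
    using ri q1 q2 by (simp add: field_simps)
  thus ?thesis using avG avT by simp
qed

end
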